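(* For every integer $d\ge1$, $\lim_{n\to\infty}\bar\delta_{n,d}=\frac{d^d}{(d+1)^{d+1}}$.
   Context: For integers $\lambda\ge0$, $d\ge1$, write $\lambda=\sum_{i=1}^d\binom{k_i}{i}$ uniquely with $k_d>\cdots>k_1\ge0$ and set $\lambda^{[d]}=\sum_{i=1}^d\binom{k_i}{i+1}$. For $n>d$ and $0\le\lambda\le\binom nd$ let $\delta_{n,d}(\lambda)=\lambda/\binom nd-\lambda^{[d]}/\binom n{d+1}$, and $\bar\delta_{n,d}=\max_{0\le\lambda\le\binom nd}\delta_{n,d}(\lambda)$ (denoted $\delta_{n,d}$ in the paper's section on limits). *)

theory Defs
  imports "HOL-Analysis.Analysis"
begin

definition cascade_rep :: "nat \<Rightarrow> nat \<Rightarrow> (nat \<Rightarrow> nat) \<Rightarrow> bool" where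
  "cascade_rep d lam k \<longleftrightarrow>
     (\<forall>i\<in>{1..<d}. k i < k (Suc i)) \<and> lam = (\<Sum>i=1..d. k i choose i)"

definition cascade_up :: "nat \<Rightarrow> nat \<Rightarrow> nat" where
  "cascade_up d lam =
     (THE m. \<exists>k. cascade_rep d lam k \<and> m = (\<Sum>i=1..d. k i choose (Suc i)))"

definition delta :: "nat \<Rightarrow> nat \<Rightarrow> nat \<Rightarrow> real" where
  "delta n d lam = real lam / real (n choose d) - real (cascade_up d lam) / real (n choose (Suc d))"

definition delta_bar :: "nat \<Rightarrow> nat \<Rightarrow> real" where
  "delta_bar n d = Max ((\<lambda>lam. delta n d lam) ` {0..n choose d})"

end

theory Submission
  imports Defs
begin

lemma casc_less:
  assumes "\<forall>i\<in>{1..<j}. k i < k (Suc i)"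
  shows "(\<Sum>i=1..j. k i choose i) < (k j + 1) choose j"
  using assms
proof (induction j)
  case 0
  then show ?case by simp
next
  case (Suc j)
  have IH: "(\<Sum>i=1..j. k i choose i) < (k j + 1) choose j"
    using Suc by auto
  have le: "(k j + 1) choose j \<le> k (Suc j) choose j"
  proof (cases "j = 0")
    case True then show ?thesis by simp
  next
    case False
    then have "k j < k (Suc j)" using Suc.prems by auto
    then show ?thesis by (intro binomial_right_mono) simp
  qed
  have "(\<Sum>i=1..Suc j. k i choose i) = (\<Sum>i=1..j. k i choose i) + (k (Suc j) choose Suc j)"
    by simp
  also have "\<dots> < (k (Suc j) choose j) + (k (Suc j) choose Suc j)"
    using IH le by linarith
  also have "\<dots> = (k (Suc j) + 1) choose Suc j" by simp
  finally show ?case .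
qed

lemma casc_ge:
  assumes "d \<ge> 1"
  shows "k d choose d \<le> (\<Sum>i=1..d. k i choose i)"
  using assms by (intro member_le_sum) auto

lemma casc_unique:
  assumes "cascade_rep d lam k" "cascade_rep d lam k'"
  shows "\<forall>i\<in>{1..d}. k i = k' i"
  using assms
proof (induction d arbitrary: lam)
  case 0
  then show ?case by simp
next
  case (Suc d)
  have ik: "\<forall>i\<in>{1..<Suc d}. k i < k (Suc i)" and sk: "lam = (\<Sum>i=1..Suc d. k i choose i)"
    using Suc.prems(1) unfolding cascade_rep_def by auto
  have ik': "\<forall>i\<in>{1..<Suc d}. k' i < k' (Suc i)" and sk': "lam = (\<Sum>i=1..Suc d. k' i choose i)"
    using Suc.prems(2) unfolding cascade_rep_def by auto
  have top: "k (Suc d) = k' (Suc d)"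
  proof (rule ccontr)
    assume "k (Suc d) \<noteq> k' (Suc d)"
    then consider "k (Suc d) < k' (Suc d)" | "k' (Suc d) < k (Suc d)" by linarith
    then show False
    proof cases
      case 1
      have "lam < (k (Suc d) + 1) choose Suc d" using casc_less[OF ik] sk by simp
      also have "\<dots> \<le> k' (Suc d) choose Suc d" using 1 by (intro binomial_right_mono) simp
      also have "\<dots> \<le> lam" using casc_ge[of "Suc d" k'] sk' by simp
      finally show False by simp
    next
      case 2
      have "lam < (k' (Suc d) + 1) choose Suc d" using casc_less[OF ik'] sk' by simp
      also have "\<dots> \<le> k (Suc d) choose Suc d" using 2 by (intro binomial_right_mono) simp
      also have "\<dots> \<le> lam" using casc_ge[of "Suc d" k] sk by simp
      finally show False by simp
    qed
  qed
  have "(\<Sum>i=1..d. k i choose i) = (\<Sum>i=1..d. k' i choose i)"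
    using sk sk' top by simp
  moreover have "cascade_rep d (\<Sum>i=1..d. k i choose i) k"
    using ik unfolding cascade_rep_def by auto
  moreover have "cascade_rep d (\<Sum>i=1..d. k i choose i) k'"
    using ik' calculation(1) unfolding cascade_rep_def by auto
  ultimately have "\<forall>i\<in>{1..d}. k i = k' i" using Suc.IH by blast
  then show ?case using top by (auto simp: le_Suc_eq)
qed

lemma choose_Suc_ge: "m - d \<le> m choose Suc d"
proof (induction m)
  case 0
  then show ?case by simp
next
  case (Suc m)
  show ?case
  proof (cases "d \<le> m")
    case True
    then have "0 < m choose d" by simp
    have "Suc m choose Suc d = (m choose d) + (m choose Suc d)" by simp
    then show ?thesis using Suc True \<open>0 < m choose d\<close> by linarith
  next
    case False
    then show ?thesis by simp
  qed
qed

lemma casc_exists: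
  assumes "d \<ge> 1"
  shows "\<exists>k. cascade_rep d lam k"
  using assms
proof (induction d arbitrary: lam rule: dec_induct)
  case base
  show ?case by (rule exI[of _ "\<lambda>_. lam"]) (simp add: cascade_rep_def)
next
  case (step d)
  define P where "P = (\<lambda>m. m choose Suc d \<le> lam)"
  have P0: "P 0" by (simp add: P_def)
  have bnd: "y \<le> lam + d" if "P y" for y
    using choose_Suc_ge[of y d] that unfolding P_def by linarith
  define m where "m = Greatest P"
  have Pm: "P m" unfolding m_def using GreatestI_nat[of P 0 "lam + d"] P0 bnd by blast
  have nP: "\<not> P (Suc m)"
  proof
    assume "P (Suc m)"
    then have "Suc m \<le> Greatest P" using Greatest_le_nat[of P "Suc m" "lam + d"] bnd by blast
    then have "Suc m \<le> m" unfolding m_def .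
    then show False by simp
  qed
  define r where "r = lam - (m choose Suc d)"
  have r_lt: "r < m choose d" using Pm nP unfolding P_def r_def by simp
  obtain k' where k': "cascade_rep d r k'" using step.IH by blast
  have "k' d choose d \<le> r"
    using casc_ge[OF step.hyps(1), of k'] k' unfolding cascade_rep_def by simp
  then have "k' d < m"
  proof -
    assume a: "k' d choose d \<le> r"
    show "k' d < m"
    proof (rule ccontr)
      assume "\<not> k' d < m"
      then have "m choose d \<le> k' d choose d" by (intro binomial_right_mono) simp
      then show False using a r_lt by linarith
    qed
  qed
  define k where "k = k'(Suc d := m)"
  have "\<forall>i\<in>{1..<Suc d}. k i < k (Suc i)"
  proof
    fix i assume i: "i \<in> {1..<Suc d}"
    show "k i < k (Suc i)"
    proof (cases "i = d")
      case True then show ?thesis using \<open>k' d < m\<close> by (simp add: k_def)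
    next
      case False
      then show ?thesis using i k' unfolding cascade_rep_def k_def by auto
    qed
  qed
  moreover have "(\<Sum>i=1..Suc d. k i choose i) = lam"
  proof -
    have "(\<Sum>i=1..d. k i choose i) = (\<Sum>i=1..d. k' i choose i)"
      by (intro sum.cong) (auto simp: k_def)
    moreover have "r = (\<Sum>i=1..d. k' i choose i)" using k' unfolding cascade_rep_def by simp
    moreover have "(\<Sum>i=1..Suc d. k i choose i) = (\<Sum>i=1..d. k i choose i) + (k (Suc d) choose Suc d)"
      by simp
    moreover have "(k (Suc d) choose Suc d) = m choose Suc d" by (simp add: k_def)
    moreover have "m choose Suc d \<le> lam" using Pm unfolding P_def .
    ultimately show ?thesis unfolding r_def by linarith
  qed
  ultimately have "cascade_rep (Suc d) lam k" unfolding cascade_rep_def by simp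
  then show ?case by blast
qed

lemma cascade_up_eq:
  assumes "cascade_rep d lam k"
  shows "cascade_up d lam = (\<Sum>i=1..d. k i choose (Suc i))"
  unfolding cascade_up_def
proof (rule the_equality)
  show "\<exists>k'. cascade_rep d lam k' \<and> (\<Sum>i=1..d. k i choose Suc i) = (\<Sum>i=1..d. k' i choose Suc i)"
    using assms by blast
next
  fix m assume "\<exists>k'. cascade_rep d lam k' \<and> m = (\<Sum>i=1..d. k' i choose Suc i)"
  then obtain k' where k': "cascade_rep d lam k'" and me: "m = (\<Sum>i=1..d. k' i choose Suc i)" by blast
  have "\<forall>i\<in>{1..d}. k i = k' i" using casc_unique[OF assms k'] .
  then have "(\<Sum>i=1..d. k i choose Suc i) = (\<Sum>i=1..d. k' i choose Suc i)"
    by (intro sum.cong) auto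
  then show "m = (\<Sum>i=1..d. k i choose Suc i)" using me by simp
qed


lemma bin_upper: "real (a choose k) * fact k \<le> real a ^ k"
proof (cases "k \<le> a")
  case False
  then show ?thesis by (simp add: binomial_eq_0)
next
  case True
  have "real (a choose k) * fact k = (\<Prod>i=0..<k. real a - of_nat i)"
    by (simp add: binomial_gbinomial gbinomial_prod_rev)
  also have "\<dots> \<le> (\<Prod>i=0..<k. real a)"
    using True by (intro prod_mono) auto
  also have "\<dots> = real a ^ k" by simp
  finally show ?thesis .
qed

lemma bin_lower:
  assumes "0 \<le> c" "c \<le> real a - real k + 1"
  shows "c ^ k \<le> real (a choose k) * fact k"
proof -
  have "c ^ k = (\<Prod>i=0..<k. c)" by simp
  also have "\<dots> \<le> (\<Prod>i=0..<k. real a - of_nat i)"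
    using assms by (intro prod_mono) auto
  also have "\<dots> = real (a choose k) * fact k"
    by (simp add: binomial_gbinomial gbinomial_prod_rev)
  finally show ?thesis .
qed

lemma powdiff:
  fixes x y :: real
  assumes "0 \<le> y" "y \<le> x" "x \<le> 2"
  shows "x ^ k - y ^ k \<le> real k * 2 ^ k * (x - y)"
proof (induction k)
  case 0
  then show ?case by simp
next
  case (Suc k)
  have "x ^ Suc k - y ^ Suc k = x * (x ^ k - y ^ k) + y ^ k * (x - y)"
    by (simp add: algebra_simps)
  also have "\<dots> \<le> 2 * (real k * 2 ^ k * (x - y)) + 2 ^ k * (x - y)"
  proof (intro add_mono mult_mono)
    show "x ^ k - y ^ k \<le> real k * 2 ^ k * (x - y)" by (rule Suc.IH)
    show "0 \<le> x ^ k - y ^ k" using assms by (simp add: power_mono)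
    show "y ^ k \<le> 2 ^ k" using assms by (intro power_mono) auto
  qed (use assms in auto)
  also have "\<dots> \<le> real (Suc k) * 2 ^ Suc k * (x - y)"
    using assms by (simp add: algebra_simps)
  finally show ?case .
qed

lemma powle:
  fixes x y e :: real
  assumes "0 \<le> x" "0 \<le> y" "x \<le> 2" "y \<le> 2" "x - y \<le> e" "0 \<le> e"
  shows "x ^ k \<le> y ^ k + real k * 2 ^ k * e"
proof (cases "y \<le> x")
  case True
  have "x ^ k - y ^ k \<le> real k * 2 ^ k * (x - y)" using powdiff assms True by blast
  also have "\<dots> \<le> real k * 2 ^ k * e" using assms by (intro mult_left_mono) auto
  finally show ?thesis by simp
next
  case False
  then have "x ^ k \<le> y ^ k" using assms by (intro power_mono) auto
  moreover have "0 \<le> real k * 2 ^ k * e" using assms by simp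
  ultimately show ?thesis by simp
qed

lemma amgm:
  fixes s :: real
  assumes "0 \<le> s"
  shows "real (k+1) * s ^ k \<le> real k * s ^ (k+1) + 1"
proof (induction k)
  case 0
  then show ?case by simp
next
  case (Suc k)
  have a: "0 \<le> (s - 1) * (s ^ (k+1) - 1)"
  proof (cases "s \<le> 1")
    case True
    have "s ^ (k+1) \<le> 1" by (rule power_le_one) (use assms True in auto)
    then show ?thesis using True by (simp add: mult_nonpos_nonpos)
  next
    case False
    have "1 \<le> s ^ (k+1)" by (rule one_le_power) (use False in auto)
    then show ?thesis using False by simp
  qed
  have b: "0 \<le> s * (real k * s ^ (k+1) + 1 - real (k+1) * s ^ k)"
    using Suc assms by simp
  have "real (Suc k) * s ^ (Suc k + 1) + 1 - real (Suc k + 1) * s ^ Suc k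
     = s * (real k * s ^ (k+1) + 1 - real (k+1) * s ^ k) + (s - 1) * (s ^ (k+1) - 1)"
    by (simp add: algebra_simps)
  then show ?case using a b by linarith
qed

lemma hmax:
  fixes t :: real
  assumes "d \<ge> 1" "0 \<le> t"
  shows "t ^ d - t ^ (d+1) \<le> real d ^ d / real (d+1) ^ (d+1)"
proof -
  define s where "s = real (d+1) * t / real d"
  have s0: "0 \<le> s" using assms by (simp add: s_def)
  have ts: "t = real d * s / real (d+1)" using assms by (simp add: s_def)
  have A: "real (d+1) * s ^ d \<le> real d * s ^ (d+1) + 1" using amgm[OF s0] .
  have pd: "real (d+1) ^ (d+1) = real (d+1) ^ d * real (d+1)" by simp
  have pos: "real (d+1) ^ d > 0" by simp
  have e1: "t ^ d * real (d+1) ^ (d+1) = real d ^ d * (real (d+1) * s ^ d)"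
    unfolding ts pd power_divide power_mult_distrib using pos by (simp add: field_simps)
  have e2a: "t ^ (d+1) * real (d+1) ^ (d+1) = (real d * s) ^ (d+1)"
    unfolding ts power_divide by simp
  have e2: "t ^ (d+1) * real (d+1) ^ (d+1) = real d ^ d * (real d * s ^ (d+1))"
    unfolding e2a power_mult_distrib by simp
  have "(t ^ d - t ^ (d+1)) * real (d+1) ^ (d+1)
      = real d ^ d * (real (d+1) * s ^ d - real d * s ^ (d+1))"
    using e1 e2 by (simp add: algebra_simps)
  also have "\<dots> \<le> real d ^ d * 1"
    using A by (intro mult_left_mono) auto
  finally have F: "(t ^ d - t ^ (d+1)) * real (d+1) ^ (d+1) \<le> real d ^ d" by simp
  have P: "0 < real (d+1)^(d+1)" by simp
  show ?thesis by (subst pos_le_divide_eq[OF P]) (rule F)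
qed

lemma errlim:
  "(\<lambda>n. K / (real n - real d)) \<longlonglongrightarrow> (0::real)"
proof -
  have "filterlim (\<lambda>n. - real d + real n) at_top sequentially"
    by (rule filterlim_tendsto_add_at_top[OF tendsto_const filterlim_real_sequentially])
  then have "filterlim (\<lambda>n. real n - real d) at_infinity sequentially"
    by (intro filterlim_at_top_imp_at_infinity) simp
  then show ?thesis by (intro tendsto_divide_0[OF tendsto_const])
qed


lemma delta_upper:
  assumes d: "d \<ge> 1" and n: "2*d+1 \<le> n" and lam: "lam \<le> n choose d"
  shows "delta n d lam \<le> real d ^ d / real (d+1) ^ (d+1)
           + real (2*(d+1)*2^(d+1)) * (real d / (real n - real d))"
proof -
  obtain k where k: "cascade_rep d lam k" using casc_exists[OF d] by blast
  define M where "M = k d"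
  have inc: "\<forall>i\<in>{1..<d}. k i < k (Suc i)" and lamk: "lam = (\<Sum>i=1..d. k i choose i)"
    using k unfolding cascade_rep_def by auto
  have up: "cascade_up d lam = (\<Sum>i=1..d. k i choose (Suc i))" by (rule cascade_up_eq[OF k])
  have upge: "M choose Suc d \<le> cascade_up d lam"
    unfolding up M_def using d by (intro member_le_sum) auto
  have lamlt: "lam < (M+1) choose d" using casc_less[OF inc] lamk M_def by simp
  have lamge: "M choose d \<le> lam" using casc_ge[OF d, of k] lamk M_def by simp
  have Mn: "M \<le> n"
  proof (rule ccontr)
    assume "\<not> M \<le> n"
    then have "Suc n choose d \<le> M choose d" by (intro binomial_right_mono) simp
    moreover have "Suc n choose d = (n choose (d-1)) + (n choose d)"
      using d by (cases d) simp_all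
    moreover have "0 < n choose (d-1)" using n by simp
    ultimately show False using lamge lam by linarith
  qed
  have Cn: "0 < real (n choose d)" using n by simp
  have Cn1: "0 < real (n choose Suc d)" using n by simp
  have nd: "real d + 1 \<le> real n - real d" using n by simp
  have npos: "0 < real n" using n by simp
  define u where "u = (real M + 1) / (real n - real d + 1)"
  define t where "t = real M / real n"
  define v where "v = max 0 ((real M - real d) / real n)"
  define q where "q = real d / (real n - real d)"
  have q0: "0 \<le> q" unfolding q_def using nd by simp
  have A: "real lam / real (n choose d) \<le> u ^ d"
  proof -
    have x: "real lam * fact d \<le> real ((M+1) choose d) * fact d"
      using lamlt by (intro mult_right_mono) auto
    have y: "real ((M+1) choose d) * fact d \<le> (real M + 1) ^ d"
      using bin_upper[of "M+1" d] by (simp add: add.commute)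
    have w: "(real n - real d + 1) ^ d \<le> real (n choose d) * fact d"
      using nd by (intro bin_lower) auto
    have w0: "0 < (real n - real d + 1) ^ d" using nd by simp
    have xy: "real lam * fact d \<le> (real M + 1) ^ d" using x y by linarith
    have "real lam * fact d / (real (n choose d) * fact d) \<le> (real M + 1) ^ d / (real n - real d + 1) ^ d"
      using xy w w0 by (intro frac_le) auto
    then show ?thesis unfolding u_def power_divide by simp
  qed
  have B: "v ^ Suc d \<le> real (cascade_up d lam) / real (n choose Suc d)"
  proof (cases "d \<le> M")
    case True
    then have v: "v = (real M - real d) / real n" unfolding v_def using npos by simp
    have x: "(real M - real d) ^ Suc d \<le> real (M choose Suc d) * fact (Suc d)"
      using True by (intro bin_lower) auto
    also have "\<dots> \<le> real (cascade_up d lam) * fact (Suc d)"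
      using upge by (intro mult_right_mono) auto
    finally have x: "(real M - real d) ^ Suc d \<le> real (cascade_up d lam) * fact (Suc d)" .
    have w: "real (n choose Suc d) * fact (Suc d) \<le> real n ^ Suc d" by (rule bin_upper)
    have "(real M - real d) ^ Suc d / real n ^ Suc d
        \<le> real (cascade_up d lam) * fact (Suc d) / (real (n choose Suc d) * fact (Suc d))"
      using x w Cn1 by (intro frac_le) auto
    then show ?thesis unfolding v power_divide by simp
  next
    case False
    then have "v = 0" unfolding v_def using npos by (simp add: divide_less_0_iff)
    then show ?thesis by simp
  qed
  have del: "delta n d lam \<le> u ^ d - v ^ Suc d"
    unfolding delta_def using A B by linarith
  have t0: "0 \<le> t" "t \<le> 1" unfolding t_def using Mn npos by auto
  have u0: "0 \<le> u" unfolding u_def using nd by simp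
  have u2: "u \<le> 2" unfolding u_def using nd Mn n
    by (simp add: divide_le_eq)
  have v0: "0 \<le> v" unfolding v_def by simp
  have vt: "v \<le> t" unfolding v_def t_def using npos by (auto simp: divide_right_mono)
  have ut: "u - t \<le> q"
  proof -
    have key: "(real M + 1 - real d) * real n \<le> real M * (real n - real d + 1)"
    proof -
      have "0 \<le> (real d - 1) * (real n - real M)" using d Mn by simp
      moreover have "real M * (real n - real d + 1) - (real M + 1 - real d) * real n
          = (real d - 1) * (real n - real M)" by (simp add: algebra_simps)
      ultimately show ?thesis by linarith
    qed
    have "(real M + 1 - real d) / (real n - real d + 1) \<le> real M / real n"
      using key nd npos by (simp add: field_simps)
    moreover have "u = (real M + 1 - real d) / (real n - real d + 1) + real d / (real n - real d + 1)"
      unfolding u_def add_divide_distrib[symmetric] by simp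
    moreover have "real d / (real n - real d + 1) \<le> q"
      unfolding q_def using nd by (intro divide_left_mono) auto
    ultimately show ?thesis unfolding t_def by linarith
  qed
  have tv: "t - v \<le> q"
  proof -
    have "t - (real M - real d) / real n = real d / real n"
      unfolding t_def using npos by (simp add: field_simps)
    moreover have "(real M - real d) / real n \<le> v" unfolding v_def by simp
    moreover have "real d / real n \<le> q"
      unfolding q_def using nd by (intro divide_left_mono) auto
    ultimately show ?thesis by linarith
  qed
  have P1: "u ^ d \<le> t ^ d + real d * 2 ^ d * q"
    using u0 t0 u2 ut q0 by (intro powle) auto
  have P2: "t ^ Suc d \<le> v ^ Suc d + real (Suc d) * 2 ^ Suc d * q"
    using u0 t0 v0 vt tv q0 by (intro powle) auto
  define c where "c = real d ^ d / real (d+1) ^ (d+1)"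
  have H: "t ^ d - t ^ Suc d \<le> c" using hmax[OF d t0(1)] unfolding c_def by simp
  have C: "real d * 2 ^ d * q + real (Suc d) * 2 ^ Suc d * q \<le> real (2*(d+1)*2^(d+1)) * q"
  proof -
    have "real d * 2 ^ d + real (Suc d) * 2 ^ Suc d \<le> real (2*(d+1)*2^(d+1))"
    proof -
      have h: "0 \<le> real d * 2^d" "0 \<le> (2::real)^d" by simp_all
      then show ?thesis by (simp add: algebra_simps)
    qed
    then have "(real d * 2 ^ d + real (Suc d) * 2 ^ Suc d) * q \<le> real (2*(d+1)*2^(d+1)) * q"
      using q0 by (rule mult_right_mono)
    then show ?thesis by (simp only: distrib_right)
  qed
  show ?thesis using del P1 P2 H C unfolding q_def[symmetric] c_def[symmetric] by linarith
qed

lemma delta_lower: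
  assumes d: "d \<ge> 1" and n: "2*d+1 \<le> n"
  defines "m \<equiv> d*n div (d+1)"
  shows "m choose d \<le> n choose d"
    and "real d ^ d / real (d+1) ^ (d+1) - real (2*(d+1)*2^(d+1)) * (real d / (real n - real d))
          \<le> delta n d (m choose d)"
proof -
  have dm1: "(d+1)*m \<le> d*n" unfolding m_def
    using div_times_less_eq_dividend[of "d*n" "d+1"] by (simp add: mult.commute)
  have dm2: "d*n < (d+1)*(m+1)"
  proof -
    have "d*n = (d*n div (d+1))*(d+1) + d*n mod (d+1)" by (rule div_mult_mod_eq[symmetric])
    moreover have "d*n mod (d+1) < d+1" by simp
    moreover have "\<And>q r. d*n = q*(d+1) + r \<Longrightarrow> r < d+1 \<Longrightarrow> d*n < (d+1)*(q+1)"
      by (simp add: algebra_simps)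
    ultimately show ?thesis unfolding m_def by blast
  qed
  have md: "d \<le> m"
  proof (rule ccontr)
    assume "\<not> d \<le> m"
    then have "m + 1 \<le> d" by simp
    then have "(d+1)*(m+1) \<le> (d+1)*d" by (intro mult_le_mono2)
    also have "\<dots> \<le> n * d" using n by (intro mult_le_mono1) simp
    finally show False using dm2 by (simp add: mult.commute)
  qed
  have mn: "m \<le> n"
  proof -
    have "(d+1)*m \<le> (d+1)*n" using dm1 by (meson le_trans mult_le_mono1 le_add1)
    then show ?thesis using mult_le_cancel1[of "d+1" m n] by linarith
  qed
  show "m choose d \<le> n choose d" using mn by (rule binomial_right_mono)
  define k where "k = (\<lambda>i. if i = d then m else i - 1)"
  have rep: "cascade_rep d (m choose d) k"
    unfolding cascade_rep_def
  proof
    show "\<forall>i\<in>{1..<d}. k i < k (Suc i)" using md by (auto simp: k_def)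
    have "\<forall>i\<in>{1..d}. (k i choose i) = (if i = d then m choose d else 0)"
      by (auto simp: k_def binomial_eq_0)
    then have "(\<Sum>i=1..d. k i choose i) = (\<Sum>i=1..d. if i = d then m choose d else 0)"
      by (intro sum.cong) auto
    also have "\<dots> = m choose d" using d by simp
    finally show "m choose d = (\<Sum>i=1..d. k i choose i)" by simp
  qed
  have up: "cascade_up d (m choose d) = m choose Suc d"
  proof -
    have "\<forall>i\<in>{1..d}. (k i choose Suc i) = (if i = d then m choose Suc d else 0)"
      by (auto simp: k_def binomial_eq_0)
    then have "(\<Sum>i=1..d. k i choose Suc i) = (\<Sum>i=1..d. if i = d then m choose Suc d else 0)"
      by (intro sum.cong) auto
    also have "\<dots> = m choose Suc d" using d by simp
    finally show ?thesis using cascade_up_eq[OF rep] by simp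
  qed
  have Cn: "0 < real (n choose d)" using n by simp
  have Cn1: "0 < real (n choose Suc d)" using n by simp
  have nd: "real d + 1 \<le> real n - real d" using n by simp
  have npos: "0 < real n" using n by simp
  have dm1r: "(real d + 1) * real m \<le> real d * real n"
  proof -
    have "real ((d+1)*m) \<le> real (d*n)" using dm1 by (simp only: of_nat_le_iff)
    then show ?thesis by (simp add: algebra_simps)
  qed
  have dm2r: "real d * real n < (real d + 1) * (real m + 1)"
  proof -
    have "real (d*n) < real ((d+1)*(m+1))" using dm2 by (simp only: of_nat_less_iff)
    then show ?thesis by (simp add: algebra_simps)
  qed
  define t0 where "t0 = real d / (real d + 1)"
  define v where "v = (real m - real d) / real n"
  define u where "u = real m / (real n - real d)"
  define q where "q = real d / (real n - real d)"
  have q0: "0 \<le> q" unfolding q_def using nd by simp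
  have A: "v ^ d \<le> real (m choose d) / real (n choose d)"
  proof -
    have x: "(real m - real d) ^ d \<le> real (m choose d) * fact d"
      using md by (intro bin_lower) auto
    have w: "real (n choose d) * fact d \<le> real n ^ d" by (rule bin_upper)
    have "(real m - real d) ^ d / real n ^ d
        \<le> real (m choose d) * fact d / (real (n choose d) * fact d)"
      using x w Cn md by (intro frac_le) auto
    then show ?thesis unfolding v_def power_divide by simp
  qed
  have B: "real (m choose Suc d) / real (n choose Suc d) \<le> u ^ Suc d"
  proof -
    have y: "real (m choose Suc d) * fact (Suc d) \<le> real m ^ Suc d" by (rule bin_upper)
    have w: "(real n - real d) ^ Suc d \<le> real (n choose Suc d) * fact (Suc d)"
      using nd by (intro bin_lower) auto
    have w0: "0 < (real n - real d) ^ Suc d" using nd by simp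
    have "real (m choose Suc d) * fact (Suc d) / (real (n choose Suc d) * fact (Suc d))
        \<le> real m ^ Suc d / (real n - real d) ^ Suc d"
      using y w w0 by (intro frac_le) auto
    then show ?thesis unfolding u_def power_divide by simp
  qed
  have del: "v ^ d - u ^ Suc d \<le> delta n d (m choose d)"
    unfolding delta_def up using A B by linarith
  have t00: "0 \<le> t0" "t0 \<le> 1" unfolding t0_def by auto
  have v0: "0 \<le> v" unfolding v_def using md npos by simp
  have mt: "real m \<le> t0 * real n"
    unfolding t0_def using dm1r by (simp add: field_simps)
  have vt: "v \<le> t0"
  proof -
    have "v \<le> real m / real n" unfolding v_def using npos by (simp add: divide_right_mono)
    also have "\<dots> \<le> t0" using mt npos by (simp add: divide_le_eq mult.commute)
    finally show ?thesis .
  qed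
  have tv: "t0 - v \<le> (real d + 1) / (real n - real d)"
  proof -
    have "t0 * real n < real m + 1"
      unfolding t0_def using dm2r by (simp add: field_simps)
    then have "t0 < (real m + 1) / real n" using npos by (simp add: field_simps)
    moreover have "(real m + 1) / real n - v = (real d + 1) / real n"
      unfolding v_def using npos by (simp add: field_simps)
    moreover have "(real d + 1) / real n \<le> (real d + 1) / (real n - real d)"
      using nd by (intro divide_left_mono) auto
    ultimately show ?thesis by linarith
  qed
  have u0: "0 \<le> u" unfolding u_def using nd by simp
  have ut: "u - t0 \<le> q"
  proof -
    have "u \<le> t0 * real n / (real n - real d)"
      unfolding u_def using mt nd by (intro divide_right_mono) auto
    moreover have "t0 * real n / (real n - real d) - t0 = t0 * q"
      unfolding q_def using nd by (simp add: field_simps)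
    moreover have "t0 * q \<le> q" using t00 q0 by (simp add: mult_left_le_one_le)
    ultimately show ?thesis by linarith
  qed
  have u2: "u \<le> 2"
  proof -
    have "u \<le> t0 + q" using ut by simp
    moreover have "q \<le> 1" unfolding q_def using nd by simp
    ultimately show ?thesis using t00 by linarith
  qed
  have P1: "t0 ^ d \<le> v ^ d + real d * 2 ^ d * ((real d + 1) / (real n - real d))"
    using t00 v0 vt tv nd by (intro powle) auto
  have P2: "u ^ Suc d \<le> t0 ^ Suc d + real (Suc d) * 2 ^ Suc d * q"
    using t00 u0 u2 ut q0 by (intro powle) auto
  have ce: "t0 ^ d - t0 ^ Suc d = real d ^ d / real (d+1) ^ (d+1)"
  proof -
    have "t0 ^ d - t0 ^ Suc d = t0 ^ d * (1 - t0)" by (simp add: algebra_simps)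
    also have "1 - t0 = 1 / (real d + 1)" unfolding t0_def by (simp add: field_simps)
    finally show ?thesis unfolding t0_def power_divide by (simp add: add.commute)
  qed
  have e1: "real d * 2 ^ d * ((real d + 1) / (real n - real d)) = real (d+1) * 2 ^ d * q"
    unfolding q_def by (simp add: field_simps)
  have C: "real (d+1) * 2 ^ d * q + real (Suc d) * 2 ^ Suc d * q \<le> real (2*(d+1)*2^(d+1)) * q"
  proof -
    have "real (d+1) * 2 ^ d + real (Suc d) * 2 ^ Suc d \<le> real (2*(d+1)*2^(d+1))"
    proof -
      have h: "0 \<le> real d * 2^d" "0 \<le> (2::real)^d" by simp_all
      then show ?thesis by (simp add: algebra_simps)
    qed
    then have "(real (d+1) * 2 ^ d + real (Suc d) * 2 ^ Suc d) * q \<le> real (2*(d+1)*2^(d+1)) * q"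
      using q0 by (rule mult_right_mono)
    then show ?thesis by (simp only: distrib_right)
  qed
  show "real d ^ d / real (d+1) ^ (d+1) - real (2*(d+1)*2^(d+1)) * (real d / (real n - real d))
          \<le> delta n d (m choose d)"
    using del P1 P2 ce e1 C unfolding q_def[symmetric] by linarith
qed

lemma errlim2:
  "(\<lambda>n. real (2*(d+1)*2^(d+1)) * (real d / (real n - real d))) \<longlonglongrightarrow> 0"
proof -
  have "(\<lambda>n. real d / (real n - real d)) \<longlonglongrightarrow> 0" by (rule errlim)
  then show ?thesis using tendsto_mult_right_zero by blast
qed

theorem proposition6p3:
  fixes d :: nat
  assumes "d \<ge> 1"
  shows "(\<lambda>n. delta_bar n d) \<longlonglongrightarrow> real d ^ d / real (d + 1) ^ (d + 1)"
proof (rule tendsto_sandwich)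
  define c where "c = real d ^ d / real (d + 1) ^ (d + 1)"
  define E where "E = (\<lambda>n::nat. real (2*(d+1)*2^(d+1)) * (real d / (real n - real d)))"
  have El: "E \<longlonglongrightarrow> 0" unfolding E_def by (rule errlim2)
  show "eventually (\<lambda>n. c - E n \<le> delta_bar n d) sequentially"
    unfolding eventually_sequentially
  proof (intro exI allI impI)
    fix n assume n: "2*d+1 \<le> n"
    define m where "m = d*n div (d+1)"
    have "m choose d \<le> n choose d" "c - E n \<le> delta n d (m choose d)"
      using delta_lower[OF assms n] unfolding m_def c_def E_def by auto
    moreover have "delta n d (m choose d) \<le> delta_bar n d"
      unfolding delta_bar_def using calculation(1) by (intro Max_ge) auto
    ultimately show "c - E n \<le> delta_bar n d" by linarith
  qed
  show "eventually (\<lambda>n. delta_bar n d \<le> c + E n) sequentially"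
    unfolding eventually_sequentially
  proof (intro exI allI impI)
    fix n assume n: "2*d+1 \<le> n"
    show "delta_bar n d \<le> c + E n"
      unfolding delta_bar_def using delta_upper[OF assms n] unfolding c_def E_def
      by (subst Max_le_iff) auto
  qed
  show "(\<lambda>n. c - E n) \<longlonglongrightarrow> c" using tendsto_diff[OF tendsto_const El] by simp
  show "(\<lambda>n. c + E n) \<longlonglongrightarrow> c" using tendsto_add[OF tendsto_const El] by simp
qed

end
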